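(* Consider the convex program $$\min F(x)\quad\text{subject to } G_i(x)\le b_i\ (i=1,\dots,m),\quad l\le x\le u,$$ with variables $x\in\mathbb{R}^n$, where $F$ and each $G_i$ are convex and differentiable on the box domain $B=\{x: l\le x\le u\}$. Let $(\mathcal{P},\mathcal{Q})$ be a reduction coloring of this program. Then: (i) if $x$ is an optimal solution of the original program, then $x'=\Pi_{\mathcal{Q}}^{\mathrm{Scaled}}x$ is an optimal solution of the reduced program; (ii) if $x'$ is an optimal solution of the reduced program, then $x=\Pi_{\mathcal{Q}}x'$ is an optimal solution of the original program.
   Context: A partition of a finite set $V$ is a set of nonempty pairwise disjoint subsets ("colors") whose union is $V$. For a partition $\mathcal{Q}$ of $\{1,\dots,n\}$, the partition matrix $\Pi_{\mathcal{Q}}\in\{0,1\}^{n\times|\mathcal{Q}|}$ has $(\Pi_{\mathcal{Q}})_{jT}=1$ if $j\in T$ and $0$ otherwise; $\Pi_{\mathcal{Q}}^{\mathrm{Scaled}}\in\mathbb{R}^{|\mathcal{Q}|\times n}$ is $\Pi_{\mathcal{Q}}^\top$ with each row normalized to sum to $1$, i.e. $(\Pi_{\mathcal{Q}}^{\mathrm{Scaled}})_{Tj}=1/|T|$ if $j\in T$ and $0$ otherwise. A point $\hat x\in\mathbb{R}^n$ is called $\mathcal{Q}$-constant if $\hat x_{j_1}=\hat x_{j_2}$ whenever $j_1,j_2$ lie in the same color of $\mathcal{Q}$. Reduction coloring: a partition $\mathcal{P}$ of the constraint indices $\{1,\dots,m\}$ and a partition $\mathcal{Q}$ of the variable indices $\{1,\dots,n\}$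 form a reduction coloring if (a) for each $T\in\mathcal{Q}$, $(l_j,u_j)$ is the same for all $j\in T$; (b) for each $S\in\mathcal{P}$, $b_i$ is the same for all $i\in S$; and for every $\mathcal{Q}$-constant $\hat x\in B$: (c) for each $T\in\mathcal{Q}$ and $j_1,j_2\in T$, $\partial F/\partial x_{j_1}(\hat x)=\partial F/\partial x_{j_2}(\hat x)$; (d) for each $S\in\mathcal{P}$, $T\in\mathcal{Q}$ and $j_1,j_2\in T$, $\partial(\sum_{i\in S}G_i)/\partial x_{j_1}(\hat x)=\partial(\sum_{i\in S}G_i)/\partial x_{j_2}(\hat x)$; (e) for each $S\in\mathcal{P}$, $G_i(\hat x)$ is the same for all $i\in S$. Reduced program: variables $x'\in\mathbb{R}^{|\mathcal{Q}|}$; objective $F'(x')=F(\Pi_{\mathcal{Q}}x')$; for each $S\in\mathcal{P}$ one constraint $G'_S(x')=G_i(\Pi_{\mathcal{Q}}x')\le b'_S$ (any $i\in S$; well defined by (e)), where $b'=\Pi_{\mathcal{P}}^{\mathrm{Scaled}}b$; box constraints $l'\le x'\le u'$ with $l'=\Pi_{\mathcal{Q}}^{\mathrm{Scaled}}l$, $u'=\Pi_{\mathcal{Q}}^{\mathrm{Scaled}}u$. *)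

theory Defs
  imports "HOL-Analysis.Analysis" "HOL-Library.Disjoint_Sets"
begin

(* Variables are indexed by a finite type 'n (so x :: real^'n), constraints by {..<m}.
   Colors are subsets of the index sets; reduced variables x' are functions on colors. *)

definition box_dom :: "real^'n \<Rightarrow> real^'n \<Rightarrow> (real^'n) set" where
  "box_dom l u = {x. \<forall>j. l$j \<le> x$j \<and> x$j \<le> u$j}"

definition Q_constant :: "'n set set \<Rightarrow> real^'n \<Rightarrow> bool" where
  "Q_constant Q x \<longleftrightarrow> (\<forall>T\<in>Q. \<forall>j1\<in>T. \<forall>j2\<in>T. x$j1 = x$j2)"

definition pderiv_at :: "(real^'n \<Rightarrow> real) \<Rightarrow> 'n \<Rightarrow> real^'n \<Rightarrow> real" where
  "pderiv_at f j x = frechet_derivative f (at x) (axis j 1)"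

definition PiQ :: "'n set set \<Rightarrow> ('n set \<Rightarrow> real) \<Rightarrow> real^'n" where
  "PiQ Q x' = (\<chi> j. \<Sum>T\<in>Q. (if j \<in> T then 1 else 0) * x' T)"

definition PiQ_scaled :: "'n set set \<Rightarrow> real^'n \<Rightarrow> ('n set \<Rightarrow> real)" where
  "PiQ_scaled Q x = (\<lambda>T. \<Sum>j\<in>UNIV. (if j \<in> T then 1 / real (card T) else 0) * x$j)"

definition PiP_scaled :: "nat \<Rightarrow> nat set set \<Rightarrow> (nat \<Rightarrow> real) \<Rightarrow> (nat set \<Rightarrow> real)" where
  "PiP_scaled m P b = (\<lambda>S. \<Sum>i<m. (if i \<in> S then 1 / real (card S) else 0) * b i)"

definition reduction_coloring ::
  "nat \<Rightarrow> (real^'n \<Rightarrow> real) \<Rightarrow> (nat \<Rightarrow> real^'n \<Rightarrow> real) \<Rightarrow> (nat \<Rightarrow> real)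
   \<Rightarrow> real^'n \<Rightarrow> real^'n \<Rightarrow> nat set set \<Rightarrow> 'n set set \<Rightarrow> bool" where
  "reduction_coloring m F G b l u P Q \<longleftrightarrow>
     partition_on {..<m} P \<and> partition_on (UNIV :: 'n set) Q \<and>
     (\<forall>T\<in>Q. \<forall>j1\<in>T. \<forall>j2\<in>T. l$j1 = l$j2 \<and> u$j1 = u$j2) \<and>
     (\<forall>S\<in>P. \<forall>i1\<in>S. \<forall>i2\<in>S. b i1 = b i2) \<and>
     (\<forall>xh \<in> box_dom l u. Q_constant Q xh \<longrightarrow>
        (\<forall>T\<in>Q. \<forall>j1\<in>T. \<forall>j2\<in>T. pderiv_at F j1 xh = pderiv_at F j2 xh) \<and>
        (\<forall>S\<in>P. \<forall>T\<in>Q. \<forall>j1\<in>T. \<forall>j2\<in>T.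
            pderiv_at (\<lambda>x. \<Sum>i\<in>S. G i x) j1 xh = pderiv_at (\<lambda>x. \<Sum>i\<in>S. G i x) j2 xh) \<and>
        (\<forall>S\<in>P. \<forall>i1\<in>S. \<forall>i2\<in>S. G i1 xh = G i2 xh))"

definition orig_feasible ::
  "nat \<Rightarrow> (nat \<Rightarrow> real^'n \<Rightarrow> real) \<Rightarrow> (nat \<Rightarrow> real) \<Rightarrow> real^'n \<Rightarrow> real^'n \<Rightarrow> real^'n \<Rightarrow> bool" where
  "orig_feasible m G b l u x \<longleftrightarrow> (\<forall>i<m. G i x \<le> b i) \<and> x \<in> box_dom l u"

definition orig_optimal ::
  "nat \<Rightarrow> (real^'n \<Rightarrow> real) \<Rightarrow> (nat \<Rightarrow> real^'n \<Rightarrow> real) \<Rightarrow> (nat \<Rightarrow> real)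
   \<Rightarrow> real^'n \<Rightarrow> real^'n \<Rightarrow> real^'n \<Rightarrow> bool" where
  "orig_optimal m F G b l u x \<longleftrightarrow> orig_feasible m G b l u x \<and>
     (\<forall>y. orig_feasible m G b l u y \<longrightarrow> F x \<le> F y)"

definition red_obj :: "(real^'n \<Rightarrow> real) \<Rightarrow> 'n set set \<Rightarrow> ('n set \<Rightarrow> real) \<Rightarrow> real" where
  "red_obj F Q x' = F (PiQ Q x')"

definition red_con :: "(nat \<Rightarrow> real^'n \<Rightarrow> real) \<Rightarrow> 'n set set \<Rightarrow> nat set \<Rightarrow> ('n set \<Rightarrow> real) \<Rightarrow> real" where
  "red_con G Q S x' = G (SOME i. i \<in> S) (PiQ Q x')"

definition red_feasible ::
  "nat \<Rightarrow> (nat \<Rightarrow> real^'n \<Rightarrow> real) \<Rightarrow> (nat \<Rightarrow> real) \<Rightarrow> real^'n \<Rightarrow> real^'n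
   \<Rightarrow> nat set set \<Rightarrow> 'n set set \<Rightarrow> ('n set \<Rightarrow> real) \<Rightarrow> bool" where
  "red_feasible m G b l u P Q x' \<longleftrightarrow>
     (\<forall>S\<in>P. red_con G Q S x' \<le> PiP_scaled m P b S) \<and>
     (\<forall>T\<in>Q. PiQ_scaled Q l T \<le> x' T \<and> x' T \<le> PiQ_scaled Q u T)"

definition red_optimal ::
  "nat \<Rightarrow> (real^'n \<Rightarrow> real) \<Rightarrow> (nat \<Rightarrow> real^'n \<Rightarrow> real) \<Rightarrow> (nat \<Rightarrow> real) \<Rightarrow> real^'n \<Rightarrow> real^'n
   \<Rightarrow> nat set set \<Rightarrow> 'n set set \<Rightarrow> ('n set \<Rightarrow> real) \<Rightarrow> bool" where
  "red_optimal m F G b l u P Q x' \<longleftrightarrow> red_feasible m G b l u P Q x' \<and>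
     (\<forall>y'. red_feasible m G b l u P Q y' \<longrightarrow> red_obj F Q x' \<le> red_obj F Q y')"

end

theory Submission
  imports Defs
begin

lemma tangent_ineq:
  fixes f :: "'a::real_normed_vector \<Rightarrow> real"
  assumes cv: "convex_on S f" and c: "c \<in> S" and y: "y \<in> S"
    and der: "(f has_derivative D) (at c)"
  shows "D (y - c) \<le> f y - f c"
proof -
  define g where "g t = f (c + t *\<^sub>R (y - c))" for t :: real
  have "((\<lambda>t. c + t *\<^sub>R (y - c)) has_derivative (\<lambda>t. t *\<^sub>R (y - c))) (at 0)"
    by (auto intro!: derivative_eq_intros)
  then have "(g has_derivative (\<lambda>t. D (t *\<^sub>R (y - c)))) (at 0)"
    unfolding g_def using der
    by (intro has_derivative_compose[where f="\<lambda>t. c + t *\<^sub>R (y - c)" and g=f, simplified]) auto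
  then have "(g has_real_derivative D (y - c)) (at 0)"
    apply (rule has_derivative_imp_has_field_derivative)
    using has_derivative_bounded_linear[OF der]
    by (simp add: linear_simps(5) bounded_linear.linear mult.commute)
  then have lim: "((\<lambda>t. (g t - g 0) / (t - 0)) \<longlongrightarrow> D (y - c)) (at_right 0)"
    using has_field_derivative_iff has_field_derivative_at_within by blast
  have ev: "eventually (\<lambda>t. (g t - g 0) / (t - 0) \<le> f y - f c) (at_right 0)"
    using eventually_at_right_real[of 0 "1::real", OF zero_less_one]
  proof (rule eventually_mono)
    fix t :: real assume t: "t \<in> {0<..<1}"
    have "g t = f ((1 - t) *\<^sub>R c + t *\<^sub>R y)"
      unfolding g_def by (simp add: algebra_simps)
    also have "\<dots> \<le> (1 - t) * f c + t * f y"
      using convex_onD[OF cv] t c y by auto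
    finally have "g t - g 0 \<le> t * (f y - f c)" by (simp add: g_def algebra_simps)
    then show "(g t - g 0) / (t - 0) \<le> f y - f c"
      using t by (simp add: divide_le_eq mult.commute)
  qed
  show ?thesis
    by (rule tendsto_upperbound[OF lim ev]) simp
qed


lemma convex_on_sum_fun:
  assumes "finite I" "I \<noteq> {}" "\<And>i. i \<in> I \<Longrightarrow> convex_on S (g i)"
  shows "convex_on S (\<lambda>x. \<Sum>i\<in>I. g i x)"
  using assms by (induction I rule: finite_ne_induct) auto

lemma vec_expand_deriv:
  fixes D :: "real^'n \<Rightarrow> real"
  assumes "linear D"
  shows "D v = (\<Sum>j\<in>UNIV. v$j * D (axis j 1))"
proof -
  have "D v = D (\<Sum>j\<in>UNIV. v$j *s axis j 1)" by (simp add: basis_expansion)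
  also have "\<dots> = (\<Sum>j\<in>UNIV. v$j * D (axis j 1))"
    using assms by (simp add: linear_sum linear_scale scalar_mult_eq_scaleR)
  finally show ?thesis .
qed

lemma sum_partition:
  fixes h :: "'n::finite \<Rightarrow> real"
  assumes Q: "partition_on (UNIV::'n set) Q"
  shows "(\<Sum>j\<in>UNIV. h j) = (\<Sum>T\<in>Q. \<Sum>j\<in>T. h j)"
proof -
  have "(\<Sum>j\<in>UNIV. h j) = (\<Sum>j\<in>\<Union>Q. h j)" using partition_onD1[OF Q] by simp
  also have "\<dots> = (\<Sum>T\<in>Q. \<Sum>j\<in>T. h j)"
    using partition_onD2[OF Q] sum.Union_disjoint[of Q h]
    by (auto simp: disjoint_def pairwise_def disjnt_def)
  finally show ?thesis .
qed

lemma color_exists: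
  assumes Q: "partition_on (UNIV::'n set) Q"
  obtains T where "T \<in> Q" "j \<in> T"
  using partition_onD1[OF Q] by blast

lemma color_unique:
  assumes Q: "partition_on A Q" "T \<in> Q" "T' \<in> Q" "j \<in> T" "j \<in> T'"
  shows "T' = T"
  using partition_onD2[OF Q(1)] Q by (auto simp: disjoint_def)

lemma color_fin_ne:
  assumes Q: "partition_on (UNIV::'n::finite set) Q" "T \<in> Q"
  shows "finite T" "T \<noteq> {}" "card T > 0"
  using partition_onD3[OF Q(1)] Q(2) by (auto simp: card_gt_0_iff)

lemma PiQ_at:
  assumes Q: "partition_on (UNIV::'n::finite set) Q" "T \<in> Q" "j \<in> T"
  shows "PiQ Q x' $ j = x' T"
proof -
  have fin: "finite Q" by (rule finite_elements[OF finite Q(1)])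
  have "PiQ Q x' $ j = (\<Sum>T'\<in>Q. (if j \<in> T' then 1 else 0) * x' T')"
    unfolding PiQ_def by simp
  also have "\<dots> = (\<Sum>T'\<in>Q. if T' = T then x' T else 0)"
  proof (rule sum.cong[OF refl])
    fix T' assume T': "T' \<in> Q"
    show "(if j \<in> T' then 1 else 0) * x' T' = (if T' = T then x' T else 0)"
    proof (cases "j \<in> T'")
      case True
      then have "T' = T" using color_unique[OF Q(1) Q(2) T' Q(3)] by simp
      then show ?thesis using True by simp
    next
      case False
      then have "T' \<noteq> T" using Q(3) by blast
      then show ?thesis using False by simp
    qed
  qed
  also have "\<dots> = x' T" using fin Q(2) by (simp add: sum.delta')
  finally show ?thesis .
qed

lemma PiQ_scaled_eq:
  assumes Q: "partition_on (UNIV::'n::finite set) Q" "T \<in> Q"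
  shows "PiQ_scaled Q x T = (\<Sum>j\<in>T. x$j) / card T"
proof -
  have "PiQ_scaled Q x T = (\<Sum>j\<in>UNIV. if j \<in> T then x$j / card T else 0)"
    unfolding PiQ_scaled_def by (auto intro!: sum.cong)
  also have "\<dots> = (\<Sum>j\<in>T. x$j / card T)"
    by (simp add: sum.If_cases)
  also have "\<dots> = (\<Sum>j\<in>T. x$j) / card T" by (simp add: sum_divide_distrib)
  finally show ?thesis .
qed

lemma PiQ_scaled_const:
  assumes Q: "partition_on (UNIV::'n::finite set) Q" "T \<in> Q" "j \<in> T"
    and c: "\<forall>k\<in>T. x$k = x$j"
  shows "PiQ_scaled Q x T = x$j"
proof -
  have "(\<Sum>k\<in>T. x$k) = card T * x$j" using c by simp
  then show ?thesis using PiQ_scaled_eq[OF Q(1,2)] color_fin_ne[OF Q(1,2)] by simp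
qed

lemma grad_ineq:
  fixes f :: "real^'n::finite \<Rightarrow> real"
  assumes Q: "partition_on (UNIV::'n set) Q"
    and cv: "convex_on S f" and c: "c \<in> S" and y: "y \<in> S"
    and dif: "f differentiable (at c)"
    and gs: "\<forall>T\<in>Q. \<forall>j1\<in>T. \<forall>j2\<in>T. pderiv_at f j1 c = pderiv_at f j2 c"
    and sums: "\<forall>T\<in>Q. (\<Sum>j\<in>T. y$j) = (\<Sum>j\<in>T. c$j)"
  shows "f c \<le> f y"
proof -
  define D where "D = frechet_derivative f (at c)"
  have der: "(f has_derivative D) (at c)" using dif frechet_derivative_works D_def by blast
  have lin: "linear D" using has_derivative_linear[OF der] .
  have pd: "pderiv_at f j c = D (axis j 1)" for j unfolding pderiv_at_def D_def by (rule refl)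
  have "D (y - c) = (\<Sum>j\<in>UNIV. (y - c)$j * D (axis j 1))"
    by (rule vec_expand_deriv[OF lin])
  also have "\<dots> = (\<Sum>j\<in>UNIV. (y - c)$j * pderiv_at f j c)"
    unfolding pd by (rule refl)
  also have "\<dots> = (\<Sum>T\<in>Q. \<Sum>j\<in>T. (y - c)$j * pderiv_at f j c)"
    by (rule sum_partition[OF Q])
  also have "\<dots> = 0"
  proof (rule sum.neutral, rule ballI)
    fix T assume T: "T \<in> Q"
    then obtain j0 where j0: "j0 \<in> T" using color_fin_ne[OF Q T] by blast
    have "(\<Sum>j\<in>T. (y - c)$j * pderiv_at f j c) = (\<Sum>j\<in>T. (y - c)$j * pderiv_at f j0 c)"
    proof (rule sum.cong[OF refl])
      fix j assume "j \<in> T"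
      then have "pderiv_at f j c = pderiv_at f j0 c" using gs T j0 by blast
      then show "(y - c)$j * pderiv_at f j c = (y - c)$j * pderiv_at f j0 c" by simp
    qed
    also have "\<dots> = (\<Sum>j\<in>T. (y - c)$j) * pderiv_at f j0 c"
      by (rule sum_distrib_right[symmetric])
    also have "(\<Sum>j\<in>T. (y - c)$j) = (\<Sum>j\<in>T. y$j) - (\<Sum>j\<in>T. c$j)"
      by (simp only: vector_minus_component sum_subtractf)
    also have "\<dots> = 0" using sums T by simp
    finally show "(\<Sum>j\<in>T. (y - c)$j * pderiv_at f j c) = 0" by simp
  qed
  finally have "D (y - c) = 0" .
  then show ?thesis using tangent_ineq[OF cv c y der] by simp
qed

definition avgQ :: "'n set set \<Rightarrow> real^'n \<Rightarrow> real^'n" where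
  "avgQ Q y = PiQ Q (PiQ_scaled Q y)"

lemma avgQ_at:
  assumes Q: "partition_on (UNIV::'n::finite set) Q" "T \<in> Q" "j \<in> T"
  shows "avgQ Q y $ j = (\<Sum>k\<in>T. y$k) / card T"
  using PiQ_at[OF Q] PiQ_scaled_eq[OF Q(1,2)] by (simp add: avgQ_def)

lemma avgQ_sum:
  assumes Q: "partition_on (UNIV::'n::finite set) Q" "T \<in> Q"
  shows "(\<Sum>j\<in>T. y$j) = (\<Sum>j\<in>T. avgQ Q y $ j)"
proof -
  have "(\<Sum>j\<in>T. avgQ Q y $ j) = (\<Sum>j\<in>T. (\<Sum>k\<in>T. y$k) / card T)"
  proof (rule sum.cong[OF refl])
    fix j assume "j \<in> T" then show "avgQ Q y $ j = (\<Sum>k\<in>T. y$k) / card T"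
      by (rule avgQ_at[OF Q])
  qed
  also have "\<dots> = card T * ((\<Sum>k\<in>T. y$k) / card T)" by (rule sum_constant)
  also have "\<dots> = (\<Sum>k\<in>T. y$k)" using color_fin_ne(3)[OF Q] by simp
  finally show ?thesis by simp
qed

lemma avgQ_box:
  assumes Q: "partition_on (UNIV::'n::finite set) Q"
    and lu: "\<forall>T\<in>Q. \<forall>j1\<in>T. \<forall>j2\<in>T. l$j1 = l$j2 \<and> u$j1 = u$j2"
    and y: "y \<in> box_dom l u"
  shows "avgQ Q y \<in> box_dom l u"
  unfolding box_dom_def
proof (intro CollectI allI)
  fix j
  obtain T where T: "T \<in> Q" "j \<in> T" using color_exists[OF Q] by blast
  have cp: "card T > 0" using color_fin_ne(3)[OF Q T(1)] .
  have yb: "l$k \<le> y$k \<and> y$k \<le> u$k" for k using y unfolding box_dom_def by blast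
  have "(\<Sum>k\<in>T. l$j) \<le> (\<Sum>k\<in>T. y$k)"
  proof (rule sum_mono)
    fix k assume "k \<in> T" then have "l$j = l$k" using lu T by blast
    then show "l$j \<le> y$k" using yb[of k] by simp
  qed
  then have 1: "card T * l$j \<le> (\<Sum>k\<in>T. y$k)" by simp
  have "(\<Sum>k\<in>T. y$k) \<le> (\<Sum>k\<in>T. u$j)"
  proof (rule sum_mono)
    fix k assume "k \<in> T" then have "u$j = u$k" using lu T by blast
    then show "y$k \<le> u$j" using yb[of k] by simp
  qed
  then have 2: "(\<Sum>k\<in>T. y$k) \<le> card T * u$j" by simp
  have a: "avgQ Q y $ j = (\<Sum>k\<in>T. y$k) / card T" by (rule avgQ_at[OF Q T])
  show "l$j \<le> avgQ Q y $ j \<and> avgQ Q y $ j \<le> u$j"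
    unfolding a using 1 2 cp by (auto simp: le_divide_eq divide_le_eq algebra_simps)
qed

lemma PiQ_const:
  assumes Q: "partition_on (UNIV::'n::finite set) Q"
  shows "Q_constant Q (PiQ Q x')"
  unfolding Q_constant_def
proof (intro ballI)
  fix T j1 j2 assume "T \<in> Q" "j1 \<in> T" "j2 \<in> T"
  then show "PiQ Q x' $ j1 = PiQ Q x' $ j2" using PiQ_at[OF Q] by metis
qed

lemma PiP_scaled_eq:
  assumes P: "partition_on {..<m} P" "S \<in> P" "i \<in> S"
    and bS: "\<forall>i1\<in>S. \<forall>i2\<in>S. b i1 = b i2"
  shows "PiP_scaled m P b S = b i"
proof -
  have sub: "S \<subseteq> {..<m}" using partition_onD1[OF P(1)] P(2) by blast
  have fin: "finite S" using finite_subset[OF sub] by simp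
  have "PiP_scaled m P b S = (\<Sum>k<m. if k \<in> S then b k / card S else 0)"
    unfolding PiP_scaled_def by (auto intro!: sum.cong)
  also have "\<dots> = (\<Sum>k\<in>S. b k / card S)"
    proof -
    have "{..<m} \<inter> S = S" using sub by blast
    then show ?thesis by (simp add: sum.If_cases)
  qed
  also have "\<dots> = (\<Sum>k\<in>S. b i / card S)"
  proof (rule sum.cong[OF refl])
    fix k assume "k \<in> S" then show "b k / card S = b i / card S" using bS P(3) by metis
  qed
  also have "\<dots> = card S * (b i / card S)" by (rule sum_constant)
  also have "\<dots> = b i" using fin P(3) by (auto simp: card_gt_0_iff)
  finally show ?thesis .
qed


lemma rc_P: "reduction_coloring m F G b l u P Q \<Longrightarrow> partition_on {..<m} P"
  unfolding reduction_coloring_def by (elim conjE)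
lemma rc_Q: "reduction_coloring m F G b l u P Q \<Longrightarrow> partition_on UNIV Q"
  unfolding reduction_coloring_def by (elim conjE)
lemma rc_lu: "reduction_coloring m F G b l u P Q \<Longrightarrow> \<forall>T\<in>Q. \<forall>j1\<in>T. \<forall>j2\<in>T. l$j1 = l$j2 \<and> u$j1 = u$j2"
  unfolding reduction_coloring_def by (elim conjE)
lemma rc_b: "reduction_coloring m F G b l u P Q \<Longrightarrow> \<forall>S\<in>P. \<forall>i1\<in>S. \<forall>i2\<in>S. b i1 = b i2"
  unfolding reduction_coloring_def by (elim conjE)
lemma rc_rest: "reduction_coloring m F G b l u P Q \<Longrightarrow> xh \<in> box_dom l u \<Longrightarrow> Q_constant Q xh \<Longrightarrow>
        (\<forall>T\<in>Q. \<forall>j1\<in>T. \<forall>j2\<in>T. pderiv_at F j1 xh = pderiv_at F j2 xh) \<and>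
        (\<forall>S\<in>P. \<forall>T\<in>Q. \<forall>j1\<in>T. \<forall>j2\<in>T.
            pderiv_at (\<lambda>x. \<Sum>i\<in>S. G i x) j1 xh = pderiv_at (\<lambda>x. \<Sum>i\<in>S. G i x) j2 xh) \<and>
        (\<forall>S\<in>P. \<forall>i1\<in>S. \<forall>i2\<in>S. G i1 xh = G i2 xh)"
  unfolding reduction_coloring_def
  apply (elim conjE)
  apply (drule bspec, assumption)
  apply (drule mp, assumption)
  by assumption
lemma rc_F:
  assumes "reduction_coloring m F G b l u P Q" "xh \<in> box_dom l u" "Q_constant Q xh"
  shows "\<forall>T\<in>Q. \<forall>j1\<in>T. \<forall>j2\<in>T. pderiv_at F j1 xh = pderiv_at F j2 xh"
  using rc_rest[OF assms] by (rule conjunct1)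
lemma rc_G:
  assumes "reduction_coloring m F G b l u P Q" "xh \<in> box_dom l u" "Q_constant Q xh"
  shows "\<forall>S\<in>P. \<forall>T\<in>Q. \<forall>j1\<in>T. \<forall>j2\<in>T.
            pderiv_at (\<lambda>x. \<Sum>i\<in>S. G i x) j1 xh = pderiv_at (\<lambda>x. \<Sum>i\<in>S. G i x) j2 xh"
  using rc_rest[OF assms] by (rule conjunct1[OF conjunct2])
lemma rc_e:
  assumes "reduction_coloring m F G b l u P Q" "xh \<in> box_dom l u" "Q_constant Q xh"
    and "S \<in> P" "i1 \<in> S" "i2 \<in> S"
  shows "G i1 xh = G i2 xh"
proof -
  have "\<forall>S\<in>P. \<forall>i1\<in>S. \<forall>i2\<in>S. G i1 xh = G i2 xh"
    using rc_rest[OF assms(1-3)] by (rule conjunct2[OF conjunct2])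
  then show ?thesis using assms(4-6) by blast
qed

lemma feas_equiv:
  assumes rc: "reduction_coloring m F G b l u P Q"
  shows "red_feasible m G b l u P Q x' \<longleftrightarrow> orig_feasible m G b l u (PiQ Q x')"
proof -
  note P = rc_P[OF rc] and Q = rc_Q[OF rc] and lu = rc_lu[OF rc] and bS = rc_b[OF rc]
  note eG = rc_e[OF rc]
  define z where "z = PiQ Q x'"
  have zc: "Q_constant Q z" unfolding z_def by (rule PiQ_const[OF Q])
  have lT: "PiQ_scaled Q l T = l$j" "PiQ_scaled Q u T = u$j" if "T \<in> Q" "j \<in> T" for T j
  proof -
    have "\<forall>k\<in>T. l$k = l$j" "\<forall>k\<in>T. u$k = u$j" using lu that by blast+
    then show "PiQ_scaled Q l T = l$j" "PiQ_scaled Q u T = u$j"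
      using PiQ_scaled_const[OF Q that] by blast+
  qed
  have zj: "z$j = x' T" if "T \<in> Q" "j \<in> T" for T j unfolding z_def by (rule PiQ_at[OF Q that])
  have Sm: "\<exists>S\<in>P. i \<in> S" if "i < m" for i using partition_onD1[OF P] that by blast
  have some: "(SOME i. i \<in> S) \<in> S" if "i \<in> S" for i :: nat and S :: "nat set" using that by (rule someI)
  have PiP: "PiP_scaled m P b S = b i" if "S \<in> P" "i \<in> S" for S i
  proof -
    have "\<forall>i1\<in>S. \<forall>i2\<in>S. b i1 = b i2" using bS that(1) by (rule bspec)
    then show ?thesis by (rule PiP_scaled_eq[OF P that])
  qed
  show ?thesis
  proof
    assume rf: "red_feasible m G b l u P Q x'"
    have zb: "z \<in> box_dom l u" unfolding box_dom_def
    proof (intro CollectI allI)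
      fix j obtain T where T: "T \<in> Q" "j \<in> T" using color_exists[OF Q] by blast
      have "PiQ_scaled Q l T \<le> x' T \<and> x' T \<le> PiQ_scaled Q u T"
        using rf T(1) unfolding red_feasible_def by blast
      then show "l$j \<le> z$j \<and> z$j \<le> u$j" using lT[OF T] zj[OF T] by simp
    qed
    have "G i z \<le> b i" if i: "i < m" for i
    proof -
      obtain S where S: "S \<in> P" "i \<in> S" using Sm[OF i] by blast
      have "G i z = G (SOME i. i \<in> S) z" using eG[OF zb zc S(1) S(2) some[OF S(2)]] .
      also have "\<dots> = red_con G Q S x'" unfolding red_con_def z_def by simp
      also have "\<dots> \<le> PiP_scaled m P b S" using rf S unfolding red_feasible_def by blast
      also have "\<dots> = b i" using PiP[OF S] .
      finally show ?thesis .
    qed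
    then show "orig_feasible m G b l u (PiQ Q x')" using zb unfolding orig_feasible_def z_def by blast
  next
    assume of: "orig_feasible m G b l u (PiQ Q x')"
    then have zb: "z \<in> box_dom l u" and zG: "\<And>i. i < m \<Longrightarrow> G i z \<le> b i"
      unfolding orig_feasible_def z_def by blast+
    have c1: "red_con G Q S x' \<le> PiP_scaled m P b S" if S: "S \<in> P" for S
    proof -
      obtain i where i: "i \<in> S" using partition_onD3[OF P] S by fastforce
      have s: "(SOME i. i \<in> S) \<in> S" using some[OF i] .
      have sm: "(SOME i. i \<in> S) < m" using partition_onD1[OF P] S s by blast
      have "red_con G Q S x' = G (SOME i. i \<in> S) z" unfolding red_con_def z_def by simp
      also have "\<dots> \<le> b (SOME i. i \<in> S)" using zG[OF sm] .
      also have "\<dots> = PiP_scaled m P b S" using PiP[OF S s] by simp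
      finally show ?thesis .
    qed
    have c2: "PiQ_scaled Q l T \<le> x' T \<and> x' T \<le> PiQ_scaled Q u T" if T: "T \<in> Q" for T
    proof -
      obtain j where j: "j \<in> T" using color_fin_ne(2)[OF Q T] by blast
      have "l$j \<le> z$j \<and> z$j \<le> u$j" using zb unfolding box_dom_def by blast
      then show ?thesis using lT[OF T j] zj[OF T j] by simp
    qed
    show "red_feasible m G b l u P Q x'" unfolding red_feasible_def using c1 c2 by blast
  qed
qed


lemma avg_feasible:
  fixes F :: "real^'n::finite \<Rightarrow> real"
  assumes cF: "convex_on (box_dom l u) F"
    and cG: "\<And>i. i < m \<Longrightarrow> convex_on (box_dom l u) (G i)"
    and dF: "\<And>x. x \<in> box_dom l u \<Longrightarrow> F differentiable (at x)"
    and dG: "\<And>i x. i < m \<Longrightarrow> x \<in> box_dom l u \<Longrightarrow> G i differentiable (at x)"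
    and rc: "reduction_coloring m F G b l u P Q"
    and yf: "orig_feasible m G b l u y"
  shows "orig_feasible m G b l u (avgQ Q y) \<and> F (avgQ Q y) \<le> F y"
proof -
  note P = rc_P[OF rc] and Q = rc_Q[OF rc] and lu = rc_lu[OF rc] and bS = rc_b[OF rc]
  define c where "c = avgQ Q y"
  have yb: "y \<in> box_dom l u" and yG: "\<And>i. i < m \<Longrightarrow> G i y \<le> b i"
    using yf unfolding orig_feasible_def by blast+
  have cb: "c \<in> box_dom l u" unfolding c_def by (rule avgQ_box[OF Q lu yb])
  have cc: "Q_constant Q c" unfolding c_def avgQ_def by (rule PiQ_const[OF Q])
  have sums: "\<forall>T\<in>Q. (\<Sum>j\<in>T. y$j) = (\<Sum>j\<in>T. c$j)"
    unfolding c_def using avgQ_sum[OF Q] by blast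
  have Fle: "F c \<le> F y"
    by (rule grad_ineq[OF Q cF cb yb dF[OF cb] rc_F[OF rc cb cc] sums])
  have "G i c \<le> b i" if i: "i < m" for i
  proof -
    obtain S where S: "S \<in> P" "i \<in> S" using partition_onD1[OF P] i by blast
    have sub: "S \<subseteq> {..<m}" using partition_onD1[OF P] S(1) by blast
    have fin: "finite S" using finite_subset[OF sub] by simp
    have ne: "S \<noteq> {}" using S(2) by blast
    define H where "H = (\<lambda>x. \<Sum>k\<in>S. G k x)"
    have cH: "convex_on (box_dom l u) H" unfolding H_def
      by (rule convex_on_sum_fun[OF fin ne]) (use sub cG in blast)
    have dH: "H differentiable (at c)" unfolding H_def
      by (rule differentiable_sum[OF fin]) (use sub dG cb in blast)
    have gH: "\<forall>T\<in>Q. \<forall>j1\<in>T. \<forall>j2\<in>T. pderiv_at H j1 c = pderiv_at H j2 c"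
      unfolding H_def using rc_G[OF rc cb cc] S(1) by (rule bspec)
    have Hle: "H c \<le> H y" by (rule grad_ineq[OF Q cH cb yb dH gH sums])
    have "H c = (\<Sum>k\<in>S. G i c)" unfolding H_def
    proof (rule sum.cong[OF refl])
      fix k assume "k \<in> S" then show "G k c = G i c" by (rule rc_e[OF rc cb cc S(1) _ S(2)])
    qed
    also have "\<dots> = card S * G i c" by simp
    finally have 1: "H c = card S * G i c" .
    have "H y \<le> (\<Sum>k\<in>S. b i)" unfolding H_def
    proof (rule sum_mono)
      fix k assume k: "k \<in> S"
      then have "G k y \<le> b k" using yG sub by blast
      moreover have "b k = b i" using bS S k by blast
      ultimately show "G k y \<le> b i" by simp
    qed
    also have "\<dots> = card S * b i" by simp
    finally have 2: "H y \<le> card S * b i" .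
    have "card S * G i c \<le> card S * b i" using 1 2 Hle by linarith
    moreover have "card S > 0" using fin ne by (simp add: card_gt_0_iff)
    ultimately show ?thesis by simp
  qed
  then show ?thesis using cb Fle unfolding orig_feasible_def c_def by blast
qed

theorem theorem1:
  fixes m :: nat
    and F :: "real^'n \<Rightarrow> real"
    and G :: "nat \<Rightarrow> real^'n \<Rightarrow> real"
    and b :: "nat \<Rightarrow> real"
    and l u :: "real^'n"
    and P :: "nat set set" and Q :: "'n set set"
  assumes "convex_on (box_dom l u) F"
    and "\<And>i. i < m \<Longrightarrow> convex_on (box_dom l u) (G i)"
    and "\<And>x. x \<in> box_dom l u \<Longrightarrow> F differentiable (at x)"
    and "\<And>i x. i < m \<Longrightarrow> x \<in> box_dom l u \<Longrightarrow> G i differentiable (at x)"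
    and "reduction_coloring m F G b l u P Q"
  shows "(\<forall>x. orig_optimal m F G b l u x \<longrightarrow> red_optimal m F G b l u P Q (PiQ_scaled Q x))
       \<and> (\<forall>x'. red_optimal m F G b l u P Q x' \<longrightarrow> orig_optimal m F G b l u (PiQ Q x'))"
proof -
  note rc = assms(5)
  have AF: "orig_feasible m G b l u (avgQ Q y) \<and> F (avgQ Q y) \<le> F y"
    if "orig_feasible m G b l u y" for y
  proof (rule avg_feasible)
    show "convex_on (box_dom l u) F" by (rule assms(1))
    show "convex_on (box_dom l u) (G i)" if "i < m" for i using that by (rule assms(2))
    show "F differentiable (at x)" if "x \<in> box_dom l u" for x using that by (rule assms(3))
    show "G i differentiable (at x)" if "i < m" "x \<in> box_dom l u" for i x
      using that by (rule assms(4))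
  qed (fact rc, fact that)
  note FE = feas_equiv[OF rc]
  have part1: "red_optimal m F G b l u P Q (PiQ_scaled Q x)" if xo: "orig_optimal m F G b l u x" for x
  proof -
    have xf: "orig_feasible m G b l u x" and xm: "\<And>y. orig_feasible m G b l u y \<Longrightarrow> F x \<le> F y"
      using xo unfolding orig_optimal_def by blast+
    have a: "orig_feasible m G b l u (avgQ Q x)" "F (avgQ Q x) \<le> F x" using AF[OF xf] by blast+
    have rf: "red_feasible m G b l u P Q (PiQ_scaled Q x)"
      using FE a(1) unfolding avgQ_def by blast
    have "red_obj F Q (PiQ_scaled Q x) \<le> red_obj F Q y'" if "red_feasible m G b l u P Q y'" for y'
    proof -
      have "orig_feasible m G b l u (PiQ Q y')" using FE that by blast
      then have "F x \<le> F (PiQ Q y')" by (rule xm)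
      then show ?thesis using a(2) unfolding red_obj_def avgQ_def by simp
    qed
    then show ?thesis using rf unfolding red_optimal_def by blast
  qed
  have part2: "orig_optimal m F G b l u (PiQ Q x')" if xo: "red_optimal m F G b l u P Q x'" for x'
  proof -
    have xf: "red_feasible m G b l u P Q x'"
      and xm: "\<And>y'. red_feasible m G b l u P Q y' \<Longrightarrow> red_obj F Q x' \<le> red_obj F Q y'"
      using xo unfolding red_optimal_def by blast+
    have of: "orig_feasible m G b l u (PiQ Q x')" using FE xf by blast
    have "F (PiQ Q x') \<le> F y" if yf: "orig_feasible m G b l u y" for y
    proof -
      have a: "orig_feasible m G b l u (avgQ Q y)" "F (avgQ Q y) \<le> F y" using AF[OF yf] by blast+
      have "red_feasible m G b l u P Q (PiQ_scaled Q y)"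
        using FE a(1) unfolding avgQ_def by blast
      then have "red_obj F Q x' \<le> red_obj F Q (PiQ_scaled Q y)" by (rule xm)
      then show ?thesis using a(2) unfolding red_obj_def avgQ_def by simp
    qed
    then show ?thesis using of unfolding orig_optimal_def by blast
  qed
  show ?thesis using part1 part2 by blast
qed

end
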